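(* Let $B=\begin{pmatrix}g_1&g_2\\-\Phi\overline{g_2}&\overline{g_1}\end{pmatrix}\in\mathrm{GL}(2,\mathbb{Q}[t,t^{-1}])$ with $g_2\neq0$. Then there exists a unique balanced matrix among the matrices $\{B\,g[0]^k : k\in\mathbb{Z}\}$, where $g[0]=\begin{pmatrix}t&0\\0&t^{-1}\end{pmatrix}$.
   Context: For $f\in\mathbb{Q}[t,t^{-1}]$, $\overline{f}(t)=f(t^{-1})$, and $\Phi=1+t^{-1}+t$. For a matrix $B=\begin{pmatrix}g_1&g_2\\-\Phi\overline{g_2}&\overline{g_1}\end{pmatrix}\in\mathrm{GL}(2,\mathbb{Q}[t,t^{-1}])$ with $g_2\neq0$, write $g_1=a_0t^{m_1}+\dots+a_{n_1-m_1}t^{n_1}$ and $g_2=b_0t^{m_2}+\dots+b_{n_2-m_2}t^{n_2}$ with $a_0,a_{n_1-m_1},b_0,b_{n_2-m_2}\neq0$. $B$ is upper-balanced if $m_1=m_2$ and $n_1=n_2+1$, lower-balanced if $m_1=m_2-1$ and $n_1=n_2$, and balanced if it is upper- or lower-balanced. *)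

theory Defs
  imports "HOL-Analysis.Analysis" "HOL-Library.Poly_Mapping"
begin

text \<open>Laurent polynomials Q[t,t^-1] are modelled as the group ring Q[Z]:
  finitely supported functions int =>0 rat with convolution product.
  The coefficient of t^n of f is Poly_Mapping.lookup f n.\<close>

type_synonym lpoly = "int \<Rightarrow>\<^sub>0 rat"

definition tpow :: "int \<Rightarrow> lpoly" where
  "tpow k = Poly_Mapping.single k 1"

definition lconj :: "lpoly \<Rightarrow> lpoly" where
  "lconj f = Poly_Mapping.map_key uminus f"

definition Phi :: lpoly where
  "Phi = 1 + tpow (-1) + tpow 1"

definition mat2 :: "lpoly \<Rightarrow> lpoly \<Rightarrow> lpoly \<Rightarrow> lpoly \<Rightarrow> lpoly^2^2" where
  "mat2 a b c d = (\<chi> i j. if i = 1 then (if j = 1 then a else b) else (if j = 1 then c else d))"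

definition Bmat :: "lpoly \<Rightarrow> lpoly \<Rightarrow> lpoly^2^2" where
  "Bmat g1 g2 = mat2 g1 g2 (- Phi * lconj g2) (lconj g1)"

definition g0 :: "lpoly^2^2" where
  "g0 = mat2 (tpow 1) 0 0 (tpow (-1))"

definition g0pow :: "int \<Rightarrow> lpoly^2^2" where
  "g0pow k = (if 0 \<le> k then ((\<lambda>M. M ** g0) ^^ nat k) (mat 1)
              else ((\<lambda>M. M ** matrix_inv g0) ^^ nat (- k)) (mat 1))"

definition lowdeg :: "lpoly \<Rightarrow> int" where
  "lowdeg f = Min (Poly_Mapping.keys f)"

definition highdeg :: "lpoly \<Rightarrow> int" where
  "highdeg f = Max (Poly_Mapping.keys f)"

definition upper_balanced :: "lpoly^2^2 \<Rightarrow> bool" where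
  "upper_balanced M \<longleftrightarrow> M$1$1 \<noteq> 0 \<and> M$1$2 \<noteq> 0 \<and>
     lowdeg (M$1$1) = lowdeg (M$1$2) \<and> highdeg (M$1$1) = highdeg (M$1$2) + 1"

definition lower_balanced :: "lpoly^2^2 \<Rightarrow> bool" where
  "lower_balanced M \<longleftrightarrow> M$1$1 \<noteq> 0 \<and> M$1$2 \<noteq> 0 \<and>
     lowdeg (M$1$1) = lowdeg (M$1$2) - 1 \<and> highdeg (M$1$1) = highdeg (M$1$2)"

definition balanced :: "lpoly^2^2 \<Rightarrow> bool" where
  "balanced M \<longleftrightarrow> upper_balanced M \<or> lower_balanced M"

end

theory Submission
  imports Defs
begin


lemma mat2_nth [simp]:
  "mat2 a b c d $ 1 $ 1 = a" "mat2 a b c d $ 1 $ 2 = b"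
  "mat2 a b c d $ 2 $ 1 = c" "mat2 a b c d $ 2 $ 2 = d"
  by (simp_all add: mat2_def)

lemma mat2_mult:
  "mat2 a b c d ** mat2 a' b' c' d' =
   mat2 (a*a' + b*c') (a*b' + b*d') (c*a' + d*c') (c*b' + d*d')"
  by (simp add: vec_eq_iff forall_2 matrix_matrix_mult_def sum_2)

lemma mat1_mat2: "(mat 1 :: lpoly^2^2) = mat2 1 0 0 1"
  by (simp add: vec_eq_iff forall_2 mat_def)

lemma tpow_mult: "tpow a * tpow b = tpow (a+b)"
  by (simp add: tpow_def mult_single)

lemma tpow_0: "tpow 0 = 1"
  by (simp add: tpow_def)

lemma matrix_inv_g0: "matrix_inv g0 = mat2 (tpow (-1)) 0 0 (tpow 1)"
proof -
  let ?X = "mat2 (tpow (-1)) 0 0 (tpow 1)"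
  have X: "g0 ** ?X = mat 1" "?X ** g0 = mat 1"
    by (simp_all add: g0_def mat2_mult tpow_mult tpow_0 mat1_mat2)
  then have "\<exists>A'. g0 ** A' = mat 1 \<and> A' ** g0 = mat 1" by blast
  then have Y: "g0 ** matrix_inv g0 = mat 1 \<and> matrix_inv g0 ** g0 = mat 1"
    unfolding matrix_inv_def by (rule someI_ex)
  have "matrix_inv g0 = matrix_inv g0 ** (g0 ** ?X)" using X by simp
  also have "\<dots> = (matrix_inv g0 ** g0) ** ?X" by (simp add: matrix_mul_assoc)
  also have "\<dots> = ?X" using Y by simp
  finally show ?thesis .
qed

lemma g0pow_eq: "g0pow k = mat2 (tpow k) 0 0 (tpow (-k))"
proof (cases "0 \<le> k")
  case True
  have "((\<lambda>M. M ** g0) ^^ n) (mat 1) = mat2 (tpow (int n)) 0 0 (tpow (- int n))" for n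
    by (induction n) (simp_all add: mat1_mat2 tpow_0 g0_def mat2_mult tpow_mult algebra_simps)
  from this[of "nat k"] True show ?thesis by (simp add: g0pow_def)
next
  case False
  have "((\<lambda>M. M ** matrix_inv g0) ^^ n) (mat 1) = mat2 (tpow (- int n)) 0 0 (tpow (int n))" for n
    by (induction n) (simp_all add: mat1_mat2 tpow_0 matrix_inv_g0 mat2_mult tpow_mult algebra_simps)
  from this[of "nat (-k)"] False show ?thesis by (simp add: g0pow_def)
qed

lemma B_g0pow: "(Bmat g1 g2 ** g0pow k) $ 1 $ 1 = g1 * tpow k"
  "(Bmat g1 g2 ** g0pow k) $ 1 $ 2 = g2 * tpow (-k)"
  by (simp_all add: Bmat_def g0pow_eq mat2_mult)

lemma det_B: "det (Bmat g1 g2) = g1 * lconj g1 + Phi * (g2 * lconj g2)"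
  by (simp add: det_2 Bmat_def algebra_simps)



lemma lookup_mult_fin:
  fixes f g :: lpoly
  shows "Poly_Mapping.lookup (f*g) k = (\<Sum>a\<in>Poly_Mapping.keys f. \<Sum>b\<in>Poly_Mapping.keys g. if k = a+b then Poly_Mapping.lookup f a * Poly_Mapping.lookup g b else 0)"
proof -
  have inner: "Sum_any (\<lambda>q. Poly_Mapping.lookup g q when k = l + q) = (\<Sum>b\<in>Poly_Mapping.keys g. if k = l+b then Poly_Mapping.lookup g b else 0)" for l
  proof -
    have "Sum_any (\<lambda>q. Poly_Mapping.lookup g q when k = l + q) = (\<Sum>b\<in>Poly_Mapping.keys g. Poly_Mapping.lookup g b when k = l+b)"
      by (rule Sum_any.expand_superset) (auto simp: in_keys_iff when_def)
    then show ?thesis by (simp add: when_def)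
  qed
  have "Poly_Mapping.lookup (f*g) k = Sum_any (\<lambda>l. Poly_Mapping.lookup f l * Sum_any (\<lambda>q. Poly_Mapping.lookup g q when k = l + q))"
    by (rule lookup_mult)
  also have "\<dots> = (\<Sum>l\<in>Poly_Mapping.keys f. Poly_Mapping.lookup f l * Sum_any (\<lambda>q. Poly_Mapping.lookup g q when k = l + q))"
    by (rule Sum_any.expand_superset) (auto simp: in_keys_iff)
  also have "\<dots> = (\<Sum>a\<in>Poly_Mapping.keys f. \<Sum>b\<in>Poly_Mapping.keys g. if k = a+b then Poly_Mapping.lookup f a * Poly_Mapping.lookup g b else 0)"
    by (simp add: inner sum_distrib_left if_distrib cong: if_cong)
  finally show ?thesis .
qed

abbreviation lk :: "lpoly \<Rightarrow> int \<Rightarrow> rat" where "lk \<equiv> Poly_Mapping.lookup"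
abbreviation ks :: "lpoly \<Rightarrow> int set" where "ks \<equiv> Poly_Mapping.keys"

lemma keys_ne: "(f::lpoly) \<noteq> 0 \<Longrightarrow> ks f \<noteq> {}"
  by simp

lemma high_in: "(f::lpoly) \<noteq> 0 \<Longrightarrow> highdeg f \<in> ks f"
  unfolding highdeg_def by (rule Max_in) auto

lemma low_in: "(f::lpoly) \<noteq> 0 \<Longrightarrow> lowdeg f \<in> ks f"
  unfolding lowdeg_def by (rule Min_in) auto

lemma le_high: "x \<in> ks f \<Longrightarrow> x \<le> highdeg f"
  unfolding highdeg_def by (rule Max_ge) auto

lemma ge_low: "x \<in> ks f \<Longrightarrow> lowdeg f \<le> x"
  unfolding lowdeg_def by (rule Min_le) auto

lemma low_le_high: "(f::lpoly) \<noteq> 0 \<Longrightarrow> lowdeg f \<le> highdeg f"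
  using high_in ge_low by blast

lemma lk_above: "highdeg f < n \<Longrightarrow> lk f n = 0"
  using le_high[of n f] by (auto simp: in_keys_iff)

lemma lk_below: "n < lowdeg f \<Longrightarrow> lk f n = 0"
  using ge_low[of n f] by (auto simp: in_keys_iff)

lemma lk_high: "(f::lpoly) \<noteq> 0 \<Longrightarrow> lk f (highdeg f) \<noteq> 0"
  using high_in by (auto simp: in_keys_iff)

lemma lk_low: "(f::lpoly) \<noteq> 0 \<Longrightarrow> lk f (lowdeg f) \<noteq> 0"
  using low_in by (auto simp: in_keys_iff)

lemma mult_high:
  assumes "f \<noteq> 0" "g \<noteq> 0"
  shows "lk (f*g) (highdeg f + highdeg g) = lk f (highdeg f) * lk g (highdeg g)"
proof -
  have "lk (f*g) (highdeg f + highdeg g) = (\<Sum>a\<in>ks f. \<Sum>b\<in>ks g.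
      if a = highdeg f then (if b = highdeg g then lk f a * lk g b else 0) else 0)"
    unfolding lookup_mult_fin
  proof (intro sum.cong refl)
    fix a b assume "a \<in> ks f" "b \<in> ks g"
    then have "a \<le> highdeg f" "b \<le> highdeg g" by (auto intro: le_high)
    then show "(if highdeg f + highdeg g = a + b then lk f a * lk g b else 0) =
      (if a = highdeg f then (if b = highdeg g then lk f a * lk g b else 0) else 0)"
      by auto
  qed
  also have "\<dots> = (\<Sum>a\<in>ks f. if a = highdeg f then lk f a * lk g (highdeg g) else 0)"
    by (intro sum.cong refl) (simp add: sum.delta' high_in[OF assms(2)])
  also have "\<dots> = lk f (highdeg f) * lk g (highdeg g)"
    using high_in[OF assms(1)] by (simp add: sum.delta')
  finally show ?thesis .
qed

lemma mult_low:
  assumes "f \<noteq> 0" "g \<noteq> 0"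
  shows "lk (f*g) (lowdeg f + lowdeg g) = lk f (lowdeg f) * lk g (lowdeg g)"
proof -
  have "lk (f*g) (lowdeg f + lowdeg g) = (\<Sum>a\<in>ks f. \<Sum>b\<in>ks g.
      if a = lowdeg f then (if b = lowdeg g then lk f a * lk g b else 0) else 0)"
    unfolding lookup_mult_fin
  proof (intro sum.cong refl)
    fix a b assume "a \<in> ks f" "b \<in> ks g"
    then have "lowdeg f \<le> a" "lowdeg g \<le> b" by (auto intro: ge_low)
    then show "(if lowdeg f + lowdeg g = a + b then lk f a * lk g b else 0) =
      (if a = lowdeg f then (if b = lowdeg g then lk f a * lk g b else 0) else 0)"
      by auto
  qed
  also have "\<dots> = (\<Sum>a\<in>ks f. if a = lowdeg f then lk f a * lk g (lowdeg g) else 0)"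
    by (intro sum.cong refl) (simp add: sum.delta' low_in[OF assms(2)])
  also have "\<dots> = lk f (lowdeg f) * lk g (lowdeg g)"
    using low_in[OF assms(1)] by (simp add: sum.delta')
  finally show ?thesis .
qed

lemma mult_above:
  assumes "highdeg f + highdeg g < n"
  shows "lk (f*g) n = 0"
  unfolding lookup_mult_fin
proof (intro sum.neutral ballI)
  fix a b assume "a \<in> ks f" "b \<in> ks g"
  then have "a \<le> highdeg f" "b \<le> highdeg g" by (auto intro: le_high)
  with assms show "(if n = a + b then lk f a * lk g b else 0) = 0" by auto
qed

lemma mult_below:
  assumes "n < lowdeg f + lowdeg g"
  shows "lk (f*g) n = 0"
  unfolding lookup_mult_fin
proof (intro sum.neutral ballI)
  fix a b assume "a \<in> ks f" "b \<in> ks g"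
  then have "lowdeg f \<le> a" "lowdeg g \<le> b" by (auto intro: ge_low)
  with assms show "(if n = a + b then lk f a * lk g b else 0) = 0" by auto
qed

lemma highdeg_eqI: "lk f n \<noteq> 0 \<Longrightarrow> (\<And>m. n < m \<Longrightarrow> lk f m = 0) \<Longrightarrow> highdeg f = n"
  unfolding highdeg_def
  by (rule Max_eqI) (auto simp: in_keys_iff not_less[symmetric])

lemma lowdeg_eqI: "lk f n \<noteq> 0 \<Longrightarrow> (\<And>m. m < n \<Longrightarrow> lk f m = 0) \<Longrightarrow> lowdeg f = n"
  unfolding lowdeg_def
  by (rule Min_eqI) (auto simp: in_keys_iff not_less[symmetric])

lemma highdeg_mult: "f \<noteq> 0 \<Longrightarrow> g \<noteq> 0 \<Longrightarrow> highdeg (f*g) = highdeg f + highdeg g"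
  by (rule highdeg_eqI) (auto simp: mult_high lk_high mult_above)

lemma lowdeg_mult: "f \<noteq> 0 \<Longrightarrow> g \<noteq> 0 \<Longrightarrow> lowdeg (f*g) = lowdeg f + lowdeg g"
  by (rule lowdeg_eqI) (auto simp: mult_low lk_low mult_below)

lemma unit_deg:
  assumes "f * u = 1"
  shows "lowdeg f = highdeg f"
proof -
  have f: "f \<noteq> 0" and u: "u \<noteq> 0" using assms by auto
  have h1: "highdeg (1::lpoly) = 0" "lowdeg (1::lpoly) = 0"
    by (simp_all add: highdeg_def lowdeg_def)
  have "highdeg f + highdeg u = 0" "lowdeg f + lowdeg u = 0"
    using highdeg_mult[OF f u] lowdeg_mult[OF f u] assms h1 by simp_all
  moreover have "lowdeg f \<le> highdeg f" "lowdeg u \<le> highdeg u"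
    using f u by (simp_all add: low_le_high)
  ultimately show ?thesis by linarith
qed


lemma lk_lconj: "lk (lconj f) n = lk f (-n)"
proof -
  have "inj (uminus :: int \<Rightarrow> int)" by (simp add: inj_def)
  then show ?thesis by (simp add: lconj_def map_key.rep_eq)
qed

lemma lconj_deg:
  assumes "f \<noteq> 0"
  shows "lconj f \<noteq> 0" "highdeg (lconj f) = - lowdeg f" "lowdeg (lconj f) = - highdeg f"
proof -
  show "highdeg (lconj f) = - lowdeg f"
    by (rule highdeg_eqI) (auto simp: lk_lconj lk_low assms intro!: lk_below)
  show "lowdeg (lconj f) = - highdeg f"
    by (rule lowdeg_eqI) (auto simp: lk_lconj lk_high assms intro!: lk_above)
  show "lconj f \<noteq> 0"
  proof
    assume "lconj f = 0"
    then have "lk (lconj f) (- lowdeg f) = 0" by simp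
    then show False using lk_low[OF assms] by (simp add: lk_lconj)
  qed
qed

lemma lk_tpow: "lk (tpow k) n = (if n = k then 1 else 0)"
  by (simp add: tpow_def lookup_single when_def)

lemma tpow_deg: "tpow k \<noteq> 0" "highdeg (tpow k) = k" "lowdeg (tpow k) = k"
proof -
  show "highdeg (tpow k) = k" by (rule highdeg_eqI) (auto simp: lk_tpow)
  show "lowdeg (tpow k) = k" by (rule lowdeg_eqI) (auto simp: lk_tpow)
  show "tpow k \<noteq> 0"
  proof
    assume "tpow k = 0"
    then have "lk (tpow k) k = 0" by simp
    then show False by (simp add: lk_tpow)
  qed
qed

lemma lk_Phi: "lk Phi n = (if n = -1 \<or> n = 0 \<or> n = 1 then 1 else 0)"
  by (auto simp: Phi_def lookup_add lookup_one lk_tpow when_def)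

lemma Phi_deg: "Phi \<noteq> 0" "highdeg Phi = 1" "lowdeg Phi = -1"
proof -
  show "highdeg Phi = 1" by (rule highdeg_eqI) (auto simp: lk_Phi)
  show "lowdeg Phi = -1" by (rule lowdeg_eqI) (auto simp: lk_Phi)
  show "Phi \<noteq> 0"
  proof
    assume "Phi = 0"
    then have "lk Phi 0 = 0" by simp
    then show False by (simp add: lk_Phi)
  qed
qed



lemma key_relation:
  fixes g1 g2 :: lpoly
  assumes inv: "invertible (Bmat g1 g2)" and g2: "g2 \<noteq> 0"
  shows "g1 \<noteq> 0 \<and> highdeg g1 - lowdeg g1 = 1 + highdeg g2 - lowdeg g2"
proof -
  obtain A' where "Bmat g1 g2 ** A' = mat 1" using inv unfolding invertible_def by blast
  then have "det (Bmat g1 g2) * det A' = 1" by (metis det_mul det_I)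
  then have D: "lowdeg (det (Bmat g1 g2)) = highdeg (det (Bmat g1 g2))" by (rule unit_deg)
  define P where "P = g1 * lconj g1"
  define Q where "Q = Phi * (g2 * lconj g2)"
  have DPQ: "det (Bmat g1 g2) = P + Q" by (simp add: P_def Q_def det_B)
  define e2 where "e2 = 1 + highdeg g2 - lowdeg g2"
  have c2: "lconj g2 \<noteq> 0" using lconj_deg[OF g2] by simp
  have R: "g2 * lconj g2 \<noteq> 0" using g2 c2 by simp
  have Q0: "Q \<noteq> 0" using R Phi_deg by (simp add: Q_def)
  have HQ: "highdeg Q = e2" "lowdeg Q = - e2"
    using highdeg_mult[OF Phi_deg(1) R] lowdeg_mult[OF Phi_deg(1) R]
      highdeg_mult[OF g2 c2] lowdeg_mult[OF g2 c2] lconj_deg[OF g2] Phi_deg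
    by (simp_all add: Q_def e2_def)
  have e2pos: "1 \<le> e2" using low_le_high[OF g2] by (simp add: e2_def)
  show ?thesis
  proof (rule ccontr)
    assume nt: "\<not> ?thesis"
    show False
    proof (cases "g1 = 0")
      case True
      then have "P = 0" by (simp add: P_def)
      then show False using D DPQ HQ e2pos by simp
    next
      case False
      have c1: "lconj g1 \<noteq> 0" using lconj_deg[OF False] by simp
      have P0: "P \<noteq> 0" using False c1 by (simp add: P_def)
      define e1 where "e1 = highdeg g1 - lowdeg g1"
      have HP: "highdeg P = e1" "lowdeg P = - e1"
        using highdeg_mult[OF False c1] lowdeg_mult[OF False c1] lconj_deg[OF False]
        by (simp_all add: P_def e1_def)
      have ne: "e1 \<noteq> e2" using nt False by (simp add: e1_def e2_def)
      define e where "e = max e1 e2"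
      have "lk (P + Q) e \<noteq> 0"
      proof (cases "e1 < e2")
        case True
        then have "lk P e = 0" using HP by (intro lk_above) (simp add: e_def)
        moreover have "lk Q e \<noteq> 0" using True HQ lk_high[OF Q0] by (simp add: e_def)
        ultimately show ?thesis by (simp add: lookup_add)
      next
        case False
        then have "e2 < e1" using ne by simp
        then have "lk Q e = 0" using HQ by (intro lk_above) (simp add: e_def)
        moreover have "lk P e \<noteq> 0" using \<open>e2 < e1\<close> HP lk_high[OF P0] by (simp add: e_def)
        ultimately show ?thesis by (simp add: lookup_add)
      qed
      then have h: "e \<le> highdeg (P + Q)" by (intro le_high) (simp add: in_keys_iff)
      have "lk (P + Q) (-e) \<noteq> 0"
      proof (cases "e1 < e2")
        case True
        then have "lk P (-e) = 0" using HP by (intro lk_below) (simp add: e_def)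
        moreover have "lk Q (-e) \<noteq> 0" using True HQ lk_low[OF Q0] by (simp add: e_def)
        ultimately show ?thesis by (simp add: lookup_add)
      next
        case False
        then have "e2 < e1" using ne by simp
        then have "lk Q (-e) = 0" using HQ by (intro lk_below) (simp add: e_def)
        moreover have "lk P (-e) \<noteq> 0" using \<open>e2 < e1\<close> HP lk_low[OF P0] by (simp add: e_def)
        ultimately show ?thesis by (simp add: lookup_add)
      qed
      then have l: "lowdeg (P + Q) \<le> -e" by (intro ge_low) (simp add: in_keys_iff)
      have "1 \<le> e" using e2pos by (simp add: e_def)
      then show False using h l D DPQ by simp
    qed
  qed
qed

lemma balanced_iff:
  fixes g1 g2 :: lpoly
  assumes g1: "g1 \<noteq> 0" and g2: "g2 \<noteq> 0"
  shows "balanced (Bmat g1 g2 ** g0pow k) \<longleftrightarrow>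
    (lowdeg g1 + k = lowdeg g2 - k \<and> highdeg g1 + k = highdeg g2 - k + 1) \<or>
    (lowdeg g1 + k = lowdeg g2 - k - 1 \<and> highdeg g1 + k = highdeg g2 - k)"
proof -
  have a: "g1 * tpow k \<noteq> 0" "highdeg (g1 * tpow k) = highdeg g1 + k" "lowdeg (g1 * tpow k) = lowdeg g1 + k"
    using g1 tpow_deg[of k] highdeg_mult[OF g1] lowdeg_mult[OF g1] by simp_all
  have b: "g2 * tpow (-k) \<noteq> 0" "highdeg (g2 * tpow (-k)) = highdeg g2 - k" "lowdeg (g2 * tpow (-k)) = lowdeg g2 - k"
    using g2 tpow_deg[of "-k"] highdeg_mult[OF g2] lowdeg_mult[OF g2] by simp_all
  show ?thesis
    unfolding balanced_def upper_balanced_def lower_balanced_def B_g0pow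
    using a b by auto
qed

theorem lemma4p14:
  fixes g1 g2 :: lpoly
  assumes "invertible (Bmat g1 g2)"
    and "g2 \<noteq> 0"
  shows "\<exists>!M. M \<in> {Bmat g1 g2 ** g0pow k | k. k \<in> (UNIV :: int set)} \<and> balanced M"
proof -
  from key_relation[OF assms] have g1: "g1 \<noteq> 0"
    and rel: "highdeg g1 - lowdeg g1 = 1 + highdeg g2 - lowdeg g2" by auto
  note bi = balanced_iff[OF g1 assms(2)]
  define k0 where "k0 = (lowdeg g2 - lowdeg g1) div 2"
  have ex: "balanced (Bmat g1 g2 ** g0pow k0)"
    unfolding bi k0_def using rel by presburger
  have uq: "k = k0" if "balanced (Bmat g1 g2 ** g0pow k)" for k
    using that ex unfolding bi k0_def using rel by presburger
  show ?thesis
  proof (rule ex1I[where a = "Bmat g1 g2 ** g0pow k0"])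
    show "Bmat g1 g2 ** g0pow k0 \<in> {Bmat g1 g2 ** g0pow k | k. k \<in> (UNIV :: int set)} \<and>
      balanced (Bmat g1 g2 ** g0pow k0)" using ex by blast
  next
    fix M assume "M \<in> {Bmat g1 g2 ** g0pow k | k. k \<in> (UNIV :: int set)} \<and> balanced M"
    then obtain k where "M = Bmat g1 g2 ** g0pow k" "balanced M" by blast
    then show "M = Bmat g1 g2 ** g0pow k0" using uq by simp
  qed
qed

end
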